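(* Fix $0<p\le\infty$. Let $t(x_1,\dots,x_n)$ and $s(x_1,\dots,x_n)$ be terms built from variables $x_1,\dots,x_n$, constants $r\in[0,\infty]$, and the binary operations $\otimes,\otimes^*,\oplus_p,\oplus^*_p$. Suppose that $t(a_1,\dots,a_n)\le s(a_1,\dots,a_n)$ for all $a_1,\dots,a_n\in[0,\infty]$ (operations evaluated in $[0,\infty]$). Then in any counary calculus (with $p$-structures as below) that contains the rule EFQ ($0$ / $\Gamma\vdash\Delta$ for all cedents $\Gamma,\Delta$), the rule $$\frac{t(\Gamma_1\vdash\Delta_1,\dots,\Gamma_n\vdash\Delta_n)}{s(\Gamma_1\vdash\Delta_1,\dots,\Gamma_n\vdash\Delta_n)}$$ (obtained by substituting sequents for the variables and reading the operations as formal structure operations) is admissible.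
   Context: Alethic values: $[0,\infty]$ with its usual order. Conjunctive multiplication $\otimes$ is the usual product on $(0,\infty)$, with $0\otimes a=a\otimes 0=0$ for all $a\in[0,\infty]$ and $a\otimes\infty=\infty\otimes a=\infty$ for $a\in(0,\infty]$. Inversion: $0^*=\infty$, $\infty^*=0$, $a^*=1/a$ otherwise. Disjunctive multiplication $a\otimes^* b:=(a^*\otimes b^* )^*$. Sum $\oplus$ is ordinary addition with $a\oplus\infty=\infty$; harmonic sum $a\oplus^*b:=(a^*\oplus b^* )^*$. For $0<p<\infty$ (conventions $0^p=0$, $\infty^p=\infty$): $a\oplus_p b:=(a^p\oplus b^p)^{1/p}$, $a\oplus^*_p b:=(a^p\oplus^* b^p)^{1/p}$; for $p=\infty$: $a\oplus_\infty b:=\max(a,b)$, $a\oplus^*_\infty b:=\min(a,b)$. Quantitative ($p$-hard) calculi: fix a set of formulas; a sequent is $\Gamma\vdash\Delta$ with $\Gamma,\Delta$ finite multisets of formulas. Structures: $H::=(\Gamma\vdash\Delta)\mid r\mid H\otimes H\mid H\otimes^*H\mid H\oplus_pH\mid H\oplus^*_pH$, $r\in[0,\infty]$ (formal operations). A structure with no sequent is closed and evaluates in $[0,\infty]$ to its validity. A rule is a schema $H/H'$ (premise structure, conclusion structure); a calculus is a set of rules; it is counary if every rule's conclusion is a single sequent. Derivations are defined inductively: identity $H/H$; rule instances; vertical composition of derivations $H\to I$ and $I\to K$; for $\ast\in\{\otimes,\otimes^*,\oplus_p,\oplus^*_p\}$, from derivations $H_1\to K_1$ and $H_2\to K_2$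 a derivation $H_1\ast H_2\to K_1\ast K_2$. A closed derivation has closed top structure; its validity is the value of that top. The provability $\|K\|_R$ of a structure $K$ in calculus $R$ is the supremum of validities of closed derivations in $R$ with bottom structure $K$ ($0$ if none). A rule is admissible in $R$ if adding it to $R$ does not change the provability of any structure. *)

theory Defs
  imports Complex_Main "HOL-Library.Extended_Nonnegative_Real" "HOL-Library.Multiset"
begin

definition ainv :: "ennreal \<Rightarrow> ennreal" where
  "ainv a = (if a = 0 then (top::ennreal) else if a = (top::ennreal) then 0 else inverse a)"

definition cmul :: "ennreal \<Rightarrow> ennreal \<Rightarrow> ennreal" where
  "cmul a b = (if a = 0 \<or> b = 0 then 0 else if a = (top::ennreal) \<or> b = (top::ennreal) then (top::ennreal) else a * b)"

definition dmul :: "ennreal \<Rightarrow> ennreal \<Rightarrow> ennreal" where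
  "dmul a b = ainv (cmul (ainv a) (ainv b))"

definition asum :: "ennreal \<Rightarrow> ennreal \<Rightarrow> ennreal" where
  "asum a b = (if a = (top::ennreal) \<or> b = (top::ennreal) then (top::ennreal) else a + b)"

definition hsum :: "ennreal \<Rightarrow> ennreal \<Rightarrow> ennreal" where
  "hsum a b = ainv (asum (ainv a) (ainv b))"

definition apow :: "real \<Rightarrow> ennreal \<Rightarrow> ennreal" where
  "apow q a = (if a = (top::ennreal) then (top::ennreal) else ennreal (enn2real a powr q))"

definition psum :: "ennreal \<Rightarrow> ennreal \<Rightarrow> ennreal \<Rightarrow> ennreal" where
  "psum p a b = (if p = (top::ennreal) then max a b
     else apow (1 / enn2real p) (asum (apow (enn2real p) a) (apow (enn2real p) b)))"

definition phsum :: "ennreal \<Rightarrow> ennreal \<Rightarrow> ennreal \<Rightarrow> ennreal" where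
  "phsum p a b = (if p = (top::ennreal) then min a b
     else apow (1 / enn2real p) (hsum (apow (enn2real p) a) (apow (enn2real p) b)))"

datatype bop = OTimes | OTimesD | OPlusP | OPlusPD

definition eval_op :: "ennreal \<Rightarrow> bop \<Rightarrow> ennreal \<Rightarrow> ennreal \<Rightarrow> ennreal" where
  "eval_op p f a b = (case f of OTimes \<Rightarrow> cmul a b | OTimesD \<Rightarrow> dmul a b
      | OPlusP \<Rightarrow> psum p a b | OPlusPD \<Rightarrow> phsum p a b)"

datatype aterm = TVar nat | TConst ennreal | TOp bop aterm aterm

primrec teval :: "ennreal \<Rightarrow> (nat \<Rightarrow> ennreal) \<Rightarrow> aterm \<Rightarrow> ennreal" where
  "teval p a (TVar i) = a i"
| "teval p a (TConst r) = r"
| "teval p a (TOp f t u) = eval_op p f (teval p a t) (teval p a u)"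

type_synonym 'f sequent = "'f multiset \<times> 'f multiset"

datatype 'f struct = Seq "'f multiset" "'f multiset" | SConst ennreal
  | SOp bop "'f struct" "'f struct"

primrec closed :: "'f struct \<Rightarrow> bool" where
  "closed (Seq G D) = False"
| "closed (SConst r) = True"
| "closed (SOp f H K) = (closed H \<and> closed K)"

(* validity of a structure; only meaningful for closed structures *)
primrec sval :: "ennreal \<Rightarrow> 'f struct \<Rightarrow> ennreal" where
  "sval p (Seq G D) = 0"
| "sval p (SConst r) = r"
| "sval p (SOp f H K) = eval_op p f (sval p H) (sval p K)"

(* a rule schema is represented by the set of its instances: pairs (premise, conclusion);
   a calculus is a set of rule instances *)
type_synonym 'f calculus = "('f struct \<times> 'f struct) set"

inductive derives :: "'f calculus \<Rightarrow> 'f struct \<Rightarrow> 'f struct \<Rightarrow> bool" for R where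
  d_id: "derives R H H"
| d_rule: "(H, K) \<in> R \<Longrightarrow> derives R H K"
| d_comp: "derives R H I \<Longrightarrow> derives R I K \<Longrightarrow> derives R H K"
| d_op: "derives R H1 K1 \<Longrightarrow> derives R H2 K2 \<Longrightarrow> derives R (SOp f H1 H2) (SOp f K1 K2)"

definition provability :: "ennreal \<Rightarrow> 'f calculus \<Rightarrow> 'f struct \<Rightarrow> ennreal" where
  "provability p R K = Sup {sval p H | H. closed H \<and> derives R H K}"

definition counary :: "'f calculus \<Rightarrow> bool" where
  "counary R \<longleftrightarrow> (\<forall>H K. (H, K) \<in> R \<longrightarrow> (\<exists>G D. K = Seq G D))"

definition admissible :: "ennreal \<Rightarrow> 'f calculus \<Rightarrow> 'f calculus \<Rightarrow> bool" where
  "admissible p R S \<longleftrightarrow> (\<forall>K. provability p (R \<union> S) K = provability p R K)"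

primrec tsubst :: "(nat \<Rightarrow> 'f sequent) \<Rightarrow> aterm \<Rightarrow> 'f struct" where
  "tsubst \<sigma> (TVar i) = Seq (fst (\<sigma> i)) (snd (\<sigma> i))"
| "tsubst \<sigma> (TConst r) = SConst r"
| "tsubst \<sigma> (TOp f t u) = SOp f (tsubst \<sigma> t) (tsubst \<sigma> u)"

definition term_rule :: "aterm \<Rightarrow> aterm \<Rightarrow> 'f calculus" where
  "term_rule t s = {(tsubst \<sigma> t, tsubst \<sigma> s) | \<sigma>. True}"

end

theory Submission
  imports Defs
begin

lemma inv_anti: assumes ab: "(a::ennreal) \<le> b" shows "inverse b \<le> inverse a"
proof (cases "a = 0 \<or> b = top")
  case True then show ?thesis by auto
next
  case False
  then have a: "a \<noteq> top" "a \<noteq> 0" and b: "b \<noteq> 0" "b \<noteq> top" using ab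
    by (auto simp: top_unique)
  obtain x where x: "a = ennreal x" "0 \<le> x" using a by (cases a) auto
  obtain y where y: "b = ennreal y" "0 \<le> y" using b by (cases b) auto
  have "0 < x" using x a by auto
  moreover have "x \<le> y" using x y ab by simp
  ultimately show ?thesis using x y by (simp add: inverse_ennreal le_imp_inverse_le)
qed

lemma apow_mono: "0 \<le> q \<Longrightarrow> a \<le> b \<Longrightarrow> apow q a \<le> apow q b"
  unfolding apow_def apply (cases "b = top") apply simp
  apply (subgoal_tac "a \<noteq> top")
  apply (auto intro!: ennreal_leI powr_mono2 enn2real_mono simp: top_unique)
  using top.not_eq_extremum apply blast
  done

lemma cmul_eq: "cmul a b = a * b"
  unfolding cmul_def by (auto simp: ennreal_mult_top ennreal_top_mult)
lemma ainv_eq: "ainv a = inverse a"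
  unfolding ainv_def by auto
lemma asum_eq: "asum a b = a + b"
  unfolding asum_def by auto

lemma cmul_mono: "a \<le> a' \<Longrightarrow> b \<le> b' \<Longrightarrow> cmul a b \<le> cmul a' b'"
  by (simp add: cmul_eq mult_mono)
lemma asum_mono: "a \<le> a' \<Longrightarrow> b \<le> b' \<Longrightarrow> asum a b \<le> asum a' b'"
  by (simp add: asum_eq add_mono)
lemma dmul_mono: "a \<le> a' \<Longrightarrow> b \<le> b' \<Longrightarrow> dmul a b \<le> dmul a' b'"
  unfolding dmul_def ainv_eq by (intro inv_anti cmul_mono) auto
lemma hsum_mono: "a \<le> a' \<Longrightarrow> b \<le> b' \<Longrightarrow> hsum a b \<le> hsum a' b'"
  unfolding hsum_def ainv_eq by (intro inv_anti asum_mono) auto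

lemma psum_mono: "a \<le> a' \<Longrightarrow> b \<le> b' \<Longrightarrow> psum p a b \<le> psum p a' b'"
  unfolding psum_def
  by (auto intro!: apow_mono asum_mono simp: max.coboundedI1 max.coboundedI2)
lemma phsum_mono: "a \<le> a' \<Longrightarrow> b \<le> b' \<Longrightarrow> phsum p a b \<le> phsum p a' b'"
  unfolding phsum_def
  by (auto intro!: apow_mono hsum_mono simp: min.coboundedI1 min.coboundedI2)

lemma eval_op_mono: "a \<le> a' \<Longrightarrow> b \<le> b' \<Longrightarrow> eval_op p f a b \<le> eval_op p f a' b'"
  unfolding eval_op_def
  by (cases f) (auto intro: cmul_mono dmul_mono psum_mono phsum_mono)

lemma teval_mono: "(\<forall>i. b i \<le> c i) \<Longrightarrow> teval p b t \<le> teval p c t"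
  by (induction t) (auto intro: eval_op_mono)

definition Ach :: "ennreal \<Rightarrow> 'f calculus \<Rightarrow> 'f struct \<Rightarrow> ennreal set" where
  "Ach p R K = {sval p H | H. closed H \<and> derives R H K}"

lemma decomp:
  assumes "derives R X W" "counary R"
  shows "W = SOp f Y Z \<Longrightarrow> \<exists>X1 X2. X = SOp f X1 X2 \<and> derives R X1 Y \<and> derives R X2 Z"
  using assms
proof (induction arbitrary: f Y Z rule: derives.induct)
  case (d_id H)
  then show ?case by (auto intro: derives.d_id)
next
  case (d_rule H K)
  then show ?case unfolding counary_def by auto
next
  case (d_comp H I K)
  from d_comp.IH(2)[OF d_comp.prems] obtain I1 I2 where
    "I = SOp f I1 I2" "derives R I1 Y" "derives R I2 Z" by blast
  with d_comp.IH(1)[OF _ d_comp.prems(2)] obtain X1 X2 where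
    "H = SOp f X1 X2" "derives R X1 I1" "derives R X2 I2" by blast
  then show ?case using \<open>derives R I1 Y\<close> \<open>derives R I2 Z\<close>
    by (auto intro: derives.d_comp)
next
  case (d_op H1 K1 H2 K2 g)
  then show ?case by auto
qed

lemma decomp_const:
  assumes "derives R X W" "counary R"
  shows "W = SConst r \<Longrightarrow> X = SConst r"
  using assms
  by (induction rule: derives.induct) (auto simp: counary_def)

lemma zero_ach:
  assumes "\<forall>G D. (SConst 0, Seq G D) \<in> R"
  shows "0 \<in> Ach p R (Seq G D)"
  unfolding Ach_def using assms
  by (auto intro!: exI[of _ "SConst 0"] derives.d_rule)

lemma L1:
  assumes p: "0 < p" and c: "counary R" and efq: "\<forall>G D. (SConst 0, Seq G D) \<in> R"
  shows "closed H \<Longrightarrow> derives R H (tsubst \<sigma> t) \<Longrightarrow>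
    \<exists>b. sval p H \<le> teval p b t \<and> (\<forall>i. b i \<in> Ach p R (tsubst \<sigma> (TVar i)))"
proof (induction t arbitrary: H)
  case (TVar j)
  define b where "b = (\<lambda>i. if i = j then sval p H else 0)"
  have 1: "\<forall>i. b i \<in> Ach p R (tsubst \<sigma> (TVar i))"
  proof
    fix i
    show "b i \<in> Ach p R (tsubst \<sigma> (TVar i))"
    proof (cases "i = j")
      case True
      then have "b i = sval p H" by (simp add: b_def)
      moreover have "sval p H \<in> Ach p R (tsubst \<sigma> (TVar i))"
        unfolding Ach_def using TVar.prems True by (intro CollectI exI[of _ H]) simp
      ultimately show ?thesis by simp
    next
      case False
      then show ?thesis using zero_ach[OF efq] unfolding b_def by simp
    qed
  qed
  have 2: "sval p H \<le> teval p b (TVar j)" by (simp add: b_def)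
  show ?case by (rule exI[of _ b]) (rule conjI[OF 2 1])
next
  case (TConst r)
  then have "H = SConst r" using decomp_const[OF _ c] by auto
  then show ?case using zero_ach[OF efq] by (auto intro!: exI[of _ "\<lambda>_. 0"])
next
  case (TOp f t1 t2)
  have "derives R H (SOp f (tsubst \<sigma> t1) (tsubst \<sigma> t2))" using TOp.prems(2) by simp
  then obtain H1 H2 where
    H: "H = SOp f H1 H2" "derives R H1 (tsubst \<sigma> t1)" "derives R H2 (tsubst \<sigma> t2)"
    using decomp[OF _ c] by blast
  have cl: "closed H1" "closed H2" using H(1) TOp.prems(1) by auto
  obtain b1 where b1: "sval p H1 \<le> teval p b1 t1" "\<forall>i. b1 i \<in> Ach p R (tsubst \<sigma> (TVar i))"
    using TOp.IH(1)[OF cl(1) H(2)] by (elim exE conjE)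
  obtain b2 where b2: "sval p H2 \<le> teval p b2 t2" "\<forall>i. b2 i \<in> Ach p R (tsubst \<sigma> (TVar i))"
    using TOp.IH(2)[OF cl(2) H(3)] by (elim exE conjE)
  define b where "b = (\<lambda>i. max (b1 i) (b2 i))"
  have bA: "\<forall>i. b i \<in> Ach p R (tsubst \<sigma> (TVar i))"
  proof
    fix i
    have "b i = b1 i \<or> b i = b2 i" unfolding b_def by (simp add: max_def)
    then show "b i \<in> Ach p R (tsubst \<sigma> (TVar i))" using b1(2) b2(2) by (elim disjE) simp_all
  qed
  have m1: "teval p b1 t1 \<le> teval p b t1" by (rule teval_mono) (simp add: b_def)
  have m2: "teval p b2 t2 \<le> teval p b t2" by (rule teval_mono) (simp add: b_def)
  have "sval p H = eval_op p f (sval p H1) (sval p H2)" using H(1) by simp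
  also have "\<dots> \<le> eval_op p f (teval p b t1) (teval p b t2)"
    by (rule eval_op_mono) (rule order_trans, rule b1(1), rule m1, rule order_trans, rule b2(1), rule m2)
  also have "\<dots> = teval p b (TOp f t1 t2)" by simp
  finally have "sval p H \<le> teval p b (TOp f t1 t2)" .
  then show ?case using bA by blast
qed

lemma L2:
  assumes "\<forall>i. b i \<in> Ach p R (tsubst \<sigma> (TVar i))"
  shows "teval p b s \<in> Ach p R (tsubst \<sigma> s)"
proof (induction s)
  case (TVar i)
  then show ?case using assms by simp
next
  case (TConst r)
  then show ?case unfolding Ach_def
    by (auto intro!: exI[of _ "SConst r"] derives.d_id)
next
  case (TOp f t1 t2)
  then obtain H1 H2 where "closed H1" "derives R H1 (tsubst \<sigma> t1)" "teval p b t1 = sval p H1"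
    "closed H2" "derives R H2 (tsubst \<sigma> t2)" "teval p b t2 = sval p H2"
    unfolding Ach_def by blast
  then show ?case unfolding Ach_def
    by (auto intro!: exI[of _ "SOp f H1 H2"] derives.d_op)
qed

lemma derives_mono: "derives R H K \<Longrightarrow> derives (R \<union> S) H K"
  by (induction rule: derives.induct) (auto intro: derives.intros)

lemma main:
  assumes p: "0 < p" and ts: "\<forall>a. teval p a t \<le> teval p a s"
    and c: "counary R" and efq: "\<forall>G D. (SConst 0, Seq G D) \<in> R"
  shows "derives (R \<union> term_rule t s) H K \<Longrightarrow> \<forall>v \<in> Ach p R H. \<exists>v' \<in> Ach p R K. v \<le> v'"
proof (induction rule: derives.induct)
  case (d_id H)
  then show ?case by auto
next
  case (d_rule H K)
  show ?case
  proof
    fix v assume v: "v \<in> Ach p R H"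
    then obtain H' where H': "closed H'" "derives R H' H" "v = sval p H'"
      unfolding Ach_def by blast
    show "\<exists>v' \<in> Ach p R K. v \<le> v'"
    proof (cases "(H, K) \<in> R")
      case True
      then have "v \<in> Ach p R K" using H' unfolding Ach_def
        by (auto intro: derives.intros)
      then show ?thesis by auto
    next
      case False
      then obtain \<sigma> where hk: "H = tsubst \<sigma> t" "K = tsubst \<sigma> s"
        using d_rule unfolding term_rule_def by auto
      obtain b where b: "sval p H' \<le> teval p b t" "\<forall>i. b i \<in> Ach p R (tsubst \<sigma> (TVar i))"
        using L1[OF p c efq H'(1)] H'(2) hk by blast
      have "teval p b s \<in> Ach p R K" using L2[OF b(2)] hk by simp
      moreover have "v \<le> teval p b s" using b(1) ts H'(3) order_trans by blast
      ultimately show ?thesis by blast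
    qed
  qed
next
  case (d_comp H I K)
  then show ?case by (meson order_trans)
next
  case (d_op H1 K1 H2 K2 f)
  show ?case
  proof
    fix v assume v: "v \<in> Ach p R (SOp f H1 H2)"
    then obtain H' where H': "closed H'" "derives R H' (SOp f H1 H2)" "v = sval p H'"
      unfolding Ach_def by blast
    then obtain X1 X2 where X: "H' = SOp f X1 X2" "derives R X1 H1" "derives R X2 H2"
      using decomp[OF _ c] by blast
    have "sval p X1 \<in> Ach p R H1" "sval p X2 \<in> Ach p R H2"
      using X H'(1) unfolding Ach_def by auto
    then obtain v1 v2 where v12: "v1 \<in> Ach p R K1" "sval p X1 \<le> v1"
      "v2 \<in> Ach p R K2" "sval p X2 \<le> v2"
      using d_op.IH by blast
    then obtain Y1 Y2 where "closed Y1" "derives R Y1 K1" "sval p Y1 = v1"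
      "closed Y2" "derives R Y2 K2" "sval p Y2 = v2"
      unfolding Ach_def by blast
    then have "eval_op p f v1 v2 \<in> Ach p R (SOp f K1 K2)" unfolding Ach_def
      by (auto intro!: exI[of _ "SOp f Y1 Y2"] derives.d_op)
    moreover have "v \<le> eval_op p f v1 v2" using H'(3) X(1) v12
      by (auto intro: eval_op_mono)
    ultimately show "\<exists>v' \<in> Ach p R (SOp f K1 K2). v \<le> v'" by blast
  qed
qed

theorem mainTheorem4:
  fixes p :: ennreal and t s :: aterm and R :: "'f calculus"
  assumes "0 < p"
    and "\<forall>a. teval p a t \<le> teval p a s"
    and "counary R"
    and "\<forall>G D. (SConst 0, Seq G D) \<in> R"
  shows "admissible p R (term_rule t s)"
  unfolding admissible_def
proof
  fix K :: "'f struct"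
  have le1: "provability p R K \<le> provability p (R \<union> term_rule t s) K"
    unfolding provability_def
    by (rule Sup_subset_mono) (auto intro: derives_mono)
  have le2: "provability p (R \<union> term_rule t s) K \<le> provability p R K"
    unfolding provability_def
  proof (rule Sup_least)
    fix x assume "x \<in> {sval p H |H. closed H \<and> derives (R \<union> term_rule t s) H K}"
    then obtain H where H: "x = sval p H" "closed H" "derives (R \<union> term_rule t s) H K" by blast
    have "x \<in> Ach p R H" using H unfolding Ach_def by (auto intro: derives.d_id)
    then obtain v' where "v' \<in> Ach p R K" "x \<le> v'"
      using main[OF assms H(3)] by blast
    then show "x \<le> Sup {sval p H |H. closed H \<and> derives R H K}"
      unfolding Ach_def by (meson Sup_upper2)
  qed
  show "provability p (R \<union> term_rule t s) K = provability p R K"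
    using le1 le2 by (rule antisym[rotated])
qed

end
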